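(* Let $G=PL_\delta(\mathbb{R}_{+})$ and $H=\{f\in G : \lim_{x\to\infty} f(x)/x = 1\}$. Then the quotient group $G/H$ is torsion-free: if $g\in G$ and $g^r\in H$ for some positive integer $r$, then $g\in H$.
   Context: A homeomorphism $f$ of $[0,\infty)$ is piecewise linear if its set $B(f)$ of breakpoints (points where $f$ is not differentiable) is discrete and $f$ is affine on each complementary interval. Its set of slopes is $\Lambda(f)=\{f'(t): t\notin B(f)\}$; $\Lambda(f)$ is bounded if there is $K>1$ with $K^{-1}<|\lambda|<K$ for all $\lambda\in\Lambda(f)$. $PL_\delta(\mathbb{R}_{+})$ denotes the group (under composition) of piecewise-linear homeomorphisms of $[0,\infty)$ with bounded set of slopes. $H$ is a normal subgroup of $G$. *)

theory Defs
  imports "HOL-Analysis.Analysis"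
begin

text \<open>Homeomorphisms of the half-line [0,\<infinity>), represented as functions real \<Rightarrow> real
  (values outside {0..} are irrelevant).\<close>
definition halfline_homeo :: "(real \<Rightarrow> real) \<Rightarrow> bool" where
  "halfline_homeo f \<longleftrightarrow> (\<exists>g. homeomorphism {0..} {0..} f g)"

definition breakpoints :: "(real \<Rightarrow> real) \<Rightarrow> real set" where
  "breakpoints f = {t. 0 \<le> t \<and> \<not> (f differentiable (at t within {0..}))}"

definition slopes :: "(real \<Rightarrow> real) \<Rightarrow> real set" where
  "slopes f = {m. \<exists>t. 0 \<le> t \<and> t \<notin> breakpoints f \<and>
                       (f has_real_derivative m) (at t within {0..})}"

text \<open>Piecewise linear: discrete (closed, i.e. locally finite) set of breakpoints and f
  affine on each interval avoiding the breakpoints.\<close>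
definition piecewise_linear :: "(real \<Rightarrow> real) \<Rightarrow> bool" where
  "piecewise_linear f \<longleftrightarrow>
     (\<forall>b. finite (breakpoints f \<inter> {0..b})) \<and>
     (\<forall>a b. 0 \<le> a \<and> a < b \<and> {a<..<b} \<inter> breakpoints f = {} \<longrightarrow>
        (\<exists>m c. \<forall>x\<in>{a..b}. f x = m * x + c))"

definition bounded_slopes :: "(real \<Rightarrow> real) \<Rightarrow> bool" where
  "bounded_slopes f \<longleftrightarrow> (\<exists>K>1. \<forall>s\<in>slopes f. inverse K < \<bar>s\<bar> \<and> \<bar>s\<bar> < K)"

definition PL_delta :: "(real \<Rightarrow> real) set" where
  "PL_delta = {f. halfline_homeo f \<and> piecewise_linear f \<and> bounded_slopes f}"

definition H_asym :: "(real \<Rightarrow> real) set" where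
  "H_asym = {f \<in> PL_delta. ((\<lambda>x. f x / x) \<longlongrightarrow> 1) at_top}"

end

theory Submission
  imports Defs
begin

lemma g_mono:
  assumes "g \<in> PL_delta"
  shows "strict_mono_on {0::real..} g" and "\<And>x. 0 \<le> x \<Longrightarrow> 0 \<le> g x"
proof -
  obtain h where hm: "homeomorphism {0..} {0..} g h"
    using assms unfolding PL_delta_def halfline_homeo_def by auto
  have cont: "continuous_on {0..} g" and im: "g ` {0..} = {0::real..}"
    using hm unfolding homeomorphism_def by auto
  have inj: "inj_on g {0..}"
    using hm by (metis homeomorphism_apply1 inj_on_inverseI)
  have "strict_mono_on {0..} g \<or> strict_antimono_on {0..} g"
    using injective_eq_monotone_map[of "{0::real..}" g] cont inj by simp
  moreover have "\<not> strict_antimono_on {0..} g"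
  proof
    assume a: "strict_antimono_on {0..} g"
    have "g 0 \<ge> 0" using im by auto
    then have "g 0 + 1 \<in> g ` {0..}" using im by simp
    then obtain x where x: "x \<ge> 0" "g x = g 0 + 1" by auto
    show False
    proof (cases "x = 0")
      case True then show False using x by simp
    next
      case False
      then have "0 < x" using x by simp
      have b: "\<forall>u\<in>{0::real..}. \<forall>v\<in>{0..}. u < v \<longrightarrow> g v < g u"
        using a unfolding monotone_on_def by auto
      have "g x < g 0" using b[rule_format, of 0 x] \<open>0 < x\<close> by simp
      then show False using x by simp
    qed
  qed
  ultimately show "strict_mono_on {0::real..} g" by blast
  show "\<And>x. 0 \<le> x \<Longrightarrow> 0 \<le> g x" using im by auto
qed

lemma iter_nn:
  fixes g :: "real \<Rightarrow> real"
  assumes nn: "\<And>x. 0 \<le> x \<Longrightarrow> 0 \<le> g x" and x: "0 \<le> (x::real)"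
  shows "0 \<le> (g ^^ n) x"
proof (induction n)
  case 0 show ?case using x by (simp only: funpow_0 id_apply)
next
  case (Suc n) then show ?case using nn by simp
qed

lemma iter_step_ge:
  assumes sm: "strict_mono_on {0::real..} g" and nn: "\<And>x. 0 \<le> x \<Longrightarrow> 0 \<le> g x"
    and x: "0 \<le> x" and gx: "x \<le> g x"
  shows "(g ^^ n) x \<le> (g ^^ Suc n) x"
proof (induction n)
  case 0 then show ?case using gx by simp
next
  case (Suc n)
  have n0: "0 \<le> (g ^^ n) x" and n1: "0 \<le> (g ^^ Suc n) x" using iter_nn[of g x] nn x by auto
  have "g ((g ^^ n) x) \<le> g ((g ^^ Suc n) x)"
    by (rule strict_mono_on_leD[OF sm]) (use Suc n0 n1 in auto)
  then show ?case by simp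
qed

lemma iter_step_le:
  assumes sm: "strict_mono_on {0::real..} g" and nn: "\<And>x. 0 \<le> x \<Longrightarrow> 0 \<le> g x"
    and x: "0 \<le> x" and gx: "g x \<le> x"
  shows "(g ^^ Suc n) x \<le> (g ^^ n) x"
proof (induction n)
  case 0 then show ?case using gx by simp
next
  case (Suc n)
  have n0: "0 \<le> (g ^^ n) x" and n1: "0 \<le> (g ^^ Suc n) x" using iter_nn[of g x] nn x by auto
  have "g ((g ^^ Suc n) x) \<le> g ((g ^^ n) x)"
    by (rule strict_mono_on_leD[OF sm]) (use Suc n0 n1 in auto)
  then show ?case by simp
qed

lemma iter_ge:
  assumes sm: "strict_mono_on {0::real..} g" and nn: "\<And>x. 0 \<le> x \<Longrightarrow> 0 \<le> g x"
    and x: "0 \<le> x" and gx: "x \<le> g x"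
  shows "g x \<le> (g ^^ Suc k) x"
proof (induction k)
  case 0 then show ?case by simp
next
  case (Suc k)
  then show ?case using iter_step_ge[OF sm nn x gx, of "Suc k"] by linarith
qed

lemma iter_le:
  assumes sm: "strict_mono_on {0::real..} g" and nn: "\<And>x. 0 \<le> x \<Longrightarrow> 0 \<le> g x"
    and x: "0 \<le> x" and gx: "g x \<le> x"
  shows "(g ^^ Suc k) x \<le> g x"
proof (induction k)
  case 0 then show ?case by simp
next
  case (Suc k)
  then show ?case using iter_step_le[OF sm nn x gx, of "Suc k"] by linarith
qed

theorem theorem2:
  fixes g :: "real \<Rightarrow> real" and r :: nat
  assumes "g \<in> PL_delta" and "0 < r" and "(g ^^ r) \<in> H_asym"
  shows "g \<in> H_asym"
proof -
  note sm = g_mono(1)[OF assms(1)] and nn = g_mono(2)[OF assms(1)]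
  obtain k where r: "r = Suc k" using assms(2) gr0_implies_Suc by blast
  let ?h = "\<lambda>x. (g ^^ r) x / x"
  have lim: "(?h \<longlongrightarrow> 1) at_top" using assms(3) unfolding H_asym_def by auto
  have l1: "((\<lambda>x. min 1 (?h x)) \<longlongrightarrow> 1) at_top"
    using tendsto_min[OF tendsto_const[of "1::real"] lim] by simp
  have l2: "((\<lambda>x. max 1 (?h x)) \<longlongrightarrow> 1) at_top"
    using tendsto_max[OF tendsto_const[of "1::real"] lim] by simp
  have ev: "\<forall>\<^sub>F x in at_top. min 1 (?h x) \<le> g x / x \<and> g x / x \<le> max 1 (?h x)"
    using eventually_gt_at_top[of "0::real"]
  proof eventually_elim
    case (elim x)
    show ?case
    proof (cases "x \<le> g x")
      case True
      have "g x \<le> (g ^^ r) x" using iter_ge[OF sm nn _ True] elim r by simp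
      then have "g x / x \<le> ?h x" using elim by (simp add: divide_right_mono)
      moreover have "1 \<le> g x / x" using True elim by simp
      ultimately show ?thesis by linarith
    next
      case False
      then have F: "g x \<le> x" by simp
      have "(g ^^ r) x \<le> g x" using iter_le[OF sm nn _ F] elim r by simp
      then have "?h x \<le> g x / x" using elim by (simp add: divide_right_mono)
      moreover have "g x / x \<le> 1" using False elim by simp
      ultimately show ?thesis by linarith
    qed
  qed
  have "((\<lambda>x. g x / x) \<longlongrightarrow> 1) at_top"
    by (rule tendsto_sandwich[OF _ _ l1 l2]) (use ev in \<open>auto elim: eventually_mono\<close>)
  then show ?thesis using assms(1) unfolding H_asym_def by auto
qed

end
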